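(* Assume X uses a memory-one strategy $\mathbf p$ that is generous and of Nash type. Assume Y uses a memory-one strategy $\mathbf q$ of Nash type such that either (i) $\mathbf q$ is generous, or (ii) $q_3+q_4>0$. Then $\{cc\}$ is the unique terminal set of the associated Markov matrix $\mathbf M$; in particular $\mathbf M$ has a unique stationary distribution.
   Context: Iterated Prisoner's Dilemma: payoffs $T>R>P>S$ with $2R>T+S$; outcomes of a round are ordered $cc,cd,dc,dd$ (first letter X's play, second Y's; $c$ = cooperate, $d$ = defect); payoff vectors $\mathbf S_X=(R,S,T,P)$, $\mathbf S_Y=(R,T,S,P)$. A memory-one strategy for X is $\mathbf p=(p_1,p_2,p_3,p_4)\in[0,1]^4$, $p_i$ the probability X plays $c$ after the $i$-th outcome. A memory-one strategy for Y is $\mathbf q=(q_1,\dots,q_4)\in[0,1]^4$, with $q_1,q_2,q_3,q_4$ the probabilities Y plays $c$ after outcomes $cc,dc,cd,dd$ respectively. The associated Markov matrix on the states $cc,cd,dc,dd$ has rows $(p_iq'_i,\ p_i(1-q'_i),\ (1-p_i)q'_i,\ (1-p_i)(1-q'_i))$, $i=1,\dots,4$, where $(q'_1,q'_2,q'_3,q'_4)=(q_1,q_3,q_2,q_4)$. A terminal set is a minimal nonempty set of states that no path of positive-probability transitions leaves. A strategy is agreeable if its first entry is $1$, and generous if its second and fourth entries are positive. For a strategy pattern of Y (any rule, possibly history-dependent and random) a limit distribution is a limit point $\mathbf v$ of the Cesàro averages of the round-$n$ outcome distributions, with payoffs $s_X=\langle\mathbf v\cdot\mathbf S_X\rangle$,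 $s_Y=\langle\mathbf v\cdot\mathbf S_Y\rangle$. A strategy for X is of Nash type if it is agreeable and, for every strategy pattern of the opponent and every associated limit distribution, $s_Y\ge R$ implies $s_Y=R$; the same definition is applied to Y's strategy with the roles of X and Y exchanged. *)

theory Defs
  imports Complex_Main
begin

text \<open>States (outcomes of a round) are coded 1 = cc, 2 = cd, 3 = dc, 4 = dd
  (first letter X's play, second Y's play).  Strategy vectors are functions
  nat => real of which only the entries 1..4 matter.\<close>

definition states :: "nat set" where "states = {1..4}"

definition x_coop :: "nat \<Rightarrow> bool" where "x_coop s \<longleftrightarrow> s = 1 \<or> s = 2"
definition y_coop :: "nat \<Rightarrow> bool" where "y_coop s \<longleftrightarrow> s = 1 \<or> s = 3"

definition is_strategy :: "(nat \<Rightarrow> real) \<Rightarrow> bool" where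
  "is_strategy p \<longleftrightarrow> (\<forall>i\<in>states. 0 \<le> p i \<and> p i \<le> 1)"

text \<open>Y's vector (q1,q2,q3,q4) refers to outcomes cc,dc,cd,dd; q' = (q1,q3,q2,q4).\<close>
definition qprime :: "(nat \<Rightarrow> real) \<Rightarrow> nat \<Rightarrow> real" where
  "qprime q i = (if i = 2 then q 3 else if i = 3 then q 2 else q i)"

definition markov :: "(nat \<Rightarrow> real) \<Rightarrow> (nat \<Rightarrow> real) \<Rightarrow> nat \<Rightarrow> nat \<Rightarrow> real" where
  "markov p q i j =
     (if x_coop j then p i else 1 - p i) * (if y_coop j then qprime q i else 1 - qprime q i)"

definition closed_set :: "(nat \<Rightarrow> nat \<Rightarrow> real) \<Rightarrow> nat set \<Rightarrow> bool" where
  "closed_set M A \<longleftrightarrow> (\<forall>i\<in>A. \<forall>j\<in>states. M i j > 0 \<longrightarrow> j \<in> A)"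

definition terminal_set :: "(nat \<Rightarrow> nat \<Rightarrow> real) \<Rightarrow> nat set \<Rightarrow> bool" where
  "terminal_set M A \<longleftrightarrow> A \<noteq> {} \<and> A \<subseteq> states \<and> closed_set M A \<and>
     (\<forall>B. B \<noteq> {} \<longrightarrow> B \<subseteq> A \<longrightarrow> closed_set M B \<longrightarrow> B = A)"

definition stationary :: "(nat \<Rightarrow> nat \<Rightarrow> real) \<Rightarrow> (nat \<Rightarrow> real) \<Rightarrow> bool" where
  "stationary M v \<longleftrightarrow> (\<forall>i\<in>states. v i \<ge> 0) \<and> (\<Sum>i\<in>states. v i) = 1 \<and>
     (\<forall>j\<in>states. (\<Sum>i\<in>states. v i * M i j) = v j)"

definition agreeable :: "(nat \<Rightarrow> real) \<Rightarrow> bool" where "agreeable p \<longleftrightarrow> p 1 = 1"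
definition generous :: "(nat \<Rightarrow> real) \<Rightarrow> bool" where "generous p \<longleftrightarrow> p 2 > 0 \<and> p 4 > 0"

text \<open>Strategy patterns: behaviour strategies, giving the probability of playing c
  as a function of the history of past outcomes (most recent outcome first).\<close>
definition is_pattern :: "(nat list \<Rightarrow> real) \<Rightarrow> bool" where
  "is_pattern \<sigma> \<longleftrightarrow> (\<forall>h. 0 \<le> \<sigma> h \<and> \<sigma> h \<le> 1)"

fun hist_prob :: "(nat list \<Rightarrow> real) \<Rightarrow> (nat list \<Rightarrow> real) \<Rightarrow> nat list \<Rightarrow> real" where
  "hist_prob sx sy [] = 1"
| "hist_prob sx sy (s # h) = hist_prob sx sy h *
     (if x_coop s then sx h else 1 - sx h) * (if y_coop s then sy h else 1 - sy h)"

text \<open>Distribution of the outcome of round n (n = 0 is the first round).\<close>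
definition round_dist :: "(nat list \<Rightarrow> real) \<Rightarrow> (nat list \<Rightarrow> real) \<Rightarrow> nat \<Rightarrow> nat \<Rightarrow> real" where
  "round_dist sx sy n s = (\<Sum>h\<in>{h. set h \<subseteq> states \<and> length h = n}. hist_prob sx sy (s # h))"

definition cesaro :: "(nat list \<Rightarrow> real) \<Rightarrow> (nat list \<Rightarrow> real) \<Rightarrow> nat \<Rightarrow> nat \<Rightarrow> real" where
  "cesaro sx sy n s = (\<Sum>k<Suc n. round_dist sx sy k s) / real (Suc n)"

definition limit_dist :: "(nat list \<Rightarrow> real) \<Rightarrow> (nat list \<Rightarrow> real) \<Rightarrow> (nat \<Rightarrow> real) \<Rightarrow> bool" where
  "limit_dist sx sy v \<longleftrightarrow> (\<exists>r. strict_mono r \<and>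
      (\<forall>s\<in>states. (\<lambda>n. cesaro sx sy (r n) s) \<longlonglongrightarrow> v s))"

definition memX :: "real \<Rightarrow> (nat \<Rightarrow> real) \<Rightarrow> nat list \<Rightarrow> real" where
  "memX p0 p h = (if h = [] then p0 else p (hd h))"
definition memY :: "real \<Rightarrow> (nat \<Rightarrow> real) \<Rightarrow> nat list \<Rightarrow> real" where
  "memY q0 q h = (if h = [] then q0 else qprime q (hd h))"

definition payX :: "real \<Rightarrow> real \<Rightarrow> real \<Rightarrow> real \<Rightarrow> (nat \<Rightarrow> real) \<Rightarrow> real" where
  "payX T R P S v = v 1 * R + v 2 * S + v 3 * T + v 4 * P"
definition payY :: "real \<Rightarrow> real \<Rightarrow> real \<Rightarrow> real \<Rightarrow> (nat \<Rightarrow> real) \<Rightarrow> real" where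
  "payY T R P S v = v 1 * R + v 2 * T + v 3 * S + v 4 * P"

definition nash_X :: "real \<Rightarrow> real \<Rightarrow> real \<Rightarrow> real \<Rightarrow> (nat \<Rightarrow> real) \<Rightarrow> bool" where
  "nash_X T R P S p \<longleftrightarrow> agreeable p \<and>
     (\<forall>p0 sy v. 0 \<le> p0 \<and> p0 \<le> 1 \<longrightarrow> is_pattern sy \<longrightarrow> limit_dist (memX p0 p) sy v \<longrightarrow>
        payY T R P S v \<ge> R \<longrightarrow> payY T R P S v = R)"

definition nash_Y :: "real \<Rightarrow> real \<Rightarrow> real \<Rightarrow> real \<Rightarrow> (nat \<Rightarrow> real) \<Rightarrow> bool" where
  "nash_Y T R P S q \<longleftrightarrow> agreeable q \<and>
     (\<forall>q0 sx v. 0 \<le> q0 \<and> q0 \<le> 1 \<longrightarrow> is_pattern sx \<longrightarrow> limit_dist sx (memY q0 q) v \<longrightarrow>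
        payX T R P S v \<ge> R \<longrightarrow> payX T R P S v = R)"

end

theory Submission
  imports Defs
begin

lemma hist_X:
  assumes "p 2 = 1"
  shows "hist_prob (memX 1 p) (\<lambda>_. 0) h = (if h = replicate (length h) 2 then 1 else 0)"
proof (induction h)
  case Nil then show ?case by simp
next
  case (Cons s h)
  show ?case
  proof (cases "h = replicate (length h) 2")
    case True
    then have "memX 1 p h = 1" using assms
      by (cases h) (auto simp: memX_def)
    then show ?thesis using Cons True by (auto simp: x_coop_def y_coop_def)
  next
    case False
    then show ?thesis using Cons by auto
  qed
qed

lemma hist_Y:
  assumes "q 2 = 1"
  shows "hist_prob (\<lambda>_. 0) (memY 1 q) h = (if h = replicate (length h) 3 then 1 else 0)"
proof (induction h)
  case Nil then show ?case by simp
next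
  case (Cons s h)
  show ?case
  proof (cases "h = replicate (length h) 3")
    case True
    then have "memY 1 q h = 1" using assms
      by (cases h) (auto simp: memY_def qprime_def)
    then show ?thesis using Cons True by (auto simp: x_coop_def y_coop_def)
  next
    case False
    then show ?thesis using Cons by auto
  qed
qed

lemma sum_H:
  fixes a :: nat
  assumes "a \<in> states"
  shows "(\<Sum>h\<in>{h. set h \<subseteq> states \<and> length h = n}. (if s = a \<and> h = replicate n a then 1 else 0::real))
     = (if s = a then 1 else 0)"
proof (cases "s = a")
  case True
  have fin: "finite {h. set h \<subseteq> states \<and> length h = n}"
    by (rule finite_lists_length_eq) (simp add: states_def)
  have mem: "replicate n a \<in> {h. set h \<subseteq> states \<and> length h = n}" using assms by auto
  show ?thesis using True sum.delta[OF fin, of "replicate n a" "\<lambda>_. 1::real"] mem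
    by simp
qed simp

lemma round_X:
  assumes "p 2 = 1"
  shows "round_dist (memX 1 p) (\<lambda>_. 0) n s = (if s = 2 then 1 else 0)"
proof -
  have "round_dist (memX 1 p) (\<lambda>_. 0) n s =
     (\<Sum>h\<in>{h. set h \<subseteq> states \<and> length h = n}. (if s = 2 \<and> h = replicate n 2 then 1 else 0::real))"
    unfolding round_dist_def
    by (rule sum.cong) (use hist_X[of p, OF assms, of "s # _"] in auto)
  also have "\<dots> = (if s = 2 then 1 else 0)" by (rule sum_H) (simp add: states_def)
  finally show ?thesis .
qed

lemma round_Y:
  assumes "q 2 = 1"
  shows "round_dist (\<lambda>_. 0) (memY 1 q) n s = (if s = 3 then 1 else 0)"
proof -
  have "round_dist (\<lambda>_. 0) (memY 1 q) n s =
     (\<Sum>h\<in>{h. set h \<subseteq> states \<and> length h = n}. (if s = 3 \<and> h = replicate n 3 then 1 else 0::real))"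
    unfolding round_dist_def
    by (rule sum.cong) (use hist_Y[of q, OF assms, of "s # _"] in auto)
  also have "\<dots> = (if s = 3 then 1 else 0)" by (rule sum_H) (simp add: states_def)
  finally show ?thesis .
qed

lemma nashX_p2:
  assumes "T > R" "nash_X T R P S p"
  shows "p 2 \<noteq> 1"
proof
  assume h: "p 2 = 1"
  define v where "v = (\<lambda>s::nat. if s = 2 then 1 else (0::real))"
  have c: "cesaro (memX 1 p) (\<lambda>_. 0) n s = v s" for n s
    unfolding cesaro_def round_X[of p, OF h] v_def by simp
  have "limit_dist (memX 1 p) (\<lambda>_. 0) v"
    unfolding limit_dist_def
    by (rule exI[of _ id]) (simp add: strict_mono_id c)
  moreover have "is_pattern (\<lambda>_. 0)" by (simp add: is_pattern_def)
  ultimately have "payY T R P S v \<ge> R \<longrightarrow> payY T R P S v = R"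
    using assms(2) unfolding nash_X_def by (meson zero_le_one order_refl)
  moreover have "payY T R P S v = T" by (simp add: payY_def v_def)
  ultimately show False using assms(1) by simp
qed

lemma nashY_q2:
  assumes "T > R" "nash_Y T R P S q"
  shows "q 2 \<noteq> 1"
proof
  assume h: "q 2 = 1"
  define v where "v = (\<lambda>s::nat. if s = 3 then 1 else (0::real))"
  have c: "cesaro (\<lambda>_. 0) (memY 1 q) n s = v s" for n s
    unfolding cesaro_def round_Y[of q, OF h] v_def by simp
  have "limit_dist (\<lambda>_. 0) (memY 1 q) v"
    unfolding limit_dist_def
    by (rule exI[of _ id]) (simp add: strict_mono_id c)
  moreover have "is_pattern (\<lambda>_. 0)" by (simp add: is_pattern_def)
  ultimately have "payX T R P S v \<ge> R \<longrightarrow> payX T R P S v = R"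
    using assms(2) unfolding nash_Y_def by (meson zero_le_one order_refl)
  moreover have "payX T R P S v = T" by (simp add: payX_def v_def)
  ultimately show False using assms(1) by simp
qed

lemma markov_vals:
  "markov p q i 1 = p i * qprime q i" "markov p q i 2 = p i * (1 - qprime q i)"
  "markov p q i 3 = (1 - p i) * qprime q i" "markov p q i 4 = (1 - p i) * (1 - qprime q i)"
  "markov p q i (Suc 0) = p i * qprime q i"
  by (simp_all add: markov_def x_coop_def y_coop_def)

lemma qprime_vals: "qprime q 1 = q 1" "qprime q 2 = q 3" "qprime q 3 = q 2" "qprime q 4 = q 4" "qprime q (Suc 0) = q (Suc 0)"
  by (simp_all add: qprime_def)

lemma states_cases: "i \<in> states \<Longrightarrow> i = 1 \<or> i = 2 \<or> i = 3 \<or> i = 4"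
  by (auto simp: states_def)

lemma closed_step: "closed_set M B \<Longrightarrow> i \<in> B \<Longrightarrow> j \<in> states \<Longrightarrow> M i j > 0 \<Longrightarrow> j \<in> B"
  by (auto simp: closed_set_def)

lemma key:
  fixes p q :: "nat \<Rightarrow> real"
  assumes "is_strategy p" "is_strategy q"
    and p2: "0 < p 2" "p 2 < 1" and p4: "p 4 > 0" and q2: "q 2 < 1" and q34: "q 3 + q 4 > 0"
    and cl: "closed_set (markov p q) B" and sub: "B \<subseteq> states" and ne: "B \<noteq> {}"
  shows "1 \<in> B"
proof -
  have st: "1 \<in> states" "2 \<in> states" "3 \<in> states" "4 \<in> states" by (auto simp: states_def)
  have b: "0 \<le> p i" "p i \<le> 1" "0 \<le> q i" "q i \<le> 1" if "i \<in> states" for i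
    using assms(1,2) that by (auto simp: is_strategy_def)
  note stp = closed_step[OF cl]
  have h2: "1 \<in> B" if "2 \<in> B"
  proof (cases "q 3 > 0")
    case True
    then have "markov p q 2 1 > 0" using p2 by (simp add: markov_vals qprime_vals)
    then show ?thesis using stp[OF that st(1)] by blast
  next
    case False
    then have q3: "q 3 = 0" using b[OF st(3)] by linarith
    then have q4: "q 4 > 0" using q34 by linarith
    have "markov p q 2 4 > 0" using p2 q3 by (simp add: markov_vals qprime_vals)
    then have "4 \<in> B" using stp[OF that st(4)] by blast
    moreover have "markov p q 4 1 > 0" using p4 q4 by (simp add: markov_vals qprime_vals)
    ultimately show ?thesis using stp st(1) by blast
  qed
  have h4: "1 \<in> B" if "4 \<in> B"
  proof (cases "q 4 > 0")
    case True
    then have "markov p q 4 1 > 0" using p4 by (simp add: markov_vals qprime_vals)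
    then show ?thesis using stp[OF that st(1)] by blast
  next
    case False
    then have q4: "q 4 = 0" using b[OF st(4)] by linarith
    have "markov p q 4 2 > 0" using p4 q4 by (simp add: markov_vals qprime_vals)
    then show ?thesis using stp[OF that st(2)] h2 by blast
  qed
  have h3: "1 \<in> B" if "3 \<in> B"
  proof (cases "p 3 > 0")
    case True
    then have "markov p q 3 2 > 0" using q2 by (simp add: markov_vals qprime_vals)
    then show ?thesis using stp[OF that st(2)] h2 by blast
  next
    case False
    then have p3: "p 3 = 0" using b[OF st(3)] by linarith
    have "markov p q 3 4 > 0" using p3 q2 by (simp add: markov_vals qprime_vals)
    then show ?thesis using stp[OF that st(4)] h4 by blast
  qed
  from ne obtain i where "i \<in> B" by blast
  then show ?thesis using sub states_cases h2 h3 h4 by blast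
qed

theorem proposition2p7:
  fixes T R P S :: real and p q :: "nat \<Rightarrow> real"
  assumes "T > R" "R > P" "P > S" "2 * R > T + S"
    and "is_strategy p" "is_strategy q"
    and "generous p" "nash_X T R P S p"
    and "nash_Y T R P S q"
    and "generous q \<or> q 3 + q 4 > 0"
  shows "(\<forall>A. terminal_set (markov p q) A \<longleftrightarrow> A = {1})
    \<and> (\<exists>v. stationary (markov p q) v)
    \<and> (\<forall>v w. stationary (markov p q) v \<longrightarrow> stationary (markov p q) w \<longrightarrow>
          (\<forall>i\<in>states. v i = w i))"
proof -
  have st: "1 \<in> states" "2 \<in> states" "3 \<in> states" "4 \<in> states" by (auto simp: states_def)
  have b: "0 \<le> p i" "p i \<le> 1" "0 \<le> q i" "q i \<le> 1" if "i \<in> states" for i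
    using assms(5,6) that by (auto simp: is_strategy_def)
  have p1: "p 1 = 1" using assms(8) by (simp add: nash_X_def agreeable_def)
  have q1: "q 1 = 1" using assms(9) by (simp add: nash_Y_def agreeable_def)
  have p2: "0 < p 2" "p 2 < 1" using assms(7) nashX_p2[OF assms(1,8)] b[OF st(2)]
    by (auto simp: generous_def)
  have p4: "p 4 > 0" using assms(7) by (simp add: generous_def)
  have q2: "q 2 < 1" using nashY_q2[OF assms(1,9)] b[OF st(2)] by auto
  have q34: "q 3 + q 4 > 0" using assms(10) b[OF st(3)] by (auto simp: generous_def)
  note K = key[OF assms(5,6) p2 p4 q2 q34]
  let ?M = "markov p q"
  have M1: "?M 1 j = (if j = 1 then 1 else 0)" if "j \<in> states" for j
    using states_cases[OF that] p1 q1 by (auto simp: markov_vals qprime_vals)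
  have Mnn: "?M i j \<ge> 0" if "i \<in> states" for i j
    using b[OF that] unfolding markov_def qprime_def
    using b[OF st(2)] b[OF st(3)] by (auto intro!: mult_nonneg_nonneg)
  have cl1: "closed_set ?M {1}" using M1 by (auto simp: closed_set_def)
  have T1: "terminal_set ?M {1}" using cl1 st by (auto simp: terminal_set_def)
  have part1: "\<forall>A. terminal_set ?M A \<longleftrightarrow> A = {1}"
  proof (intro allI iffI)
    fix A assume "terminal_set ?M A"
    then have A: "A \<noteq> {}" "A \<subseteq> states" "closed_set ?M A"
      "\<And>B. B \<noteq> {} \<Longrightarrow> B \<subseteq> A \<Longrightarrow> closed_set ?M B \<Longrightarrow> B = A"
      by (auto simp: terminal_set_def)
    have "1 \<in> A" using K[OF A(3,2,1)] .
    then show "A = {1}" using A(4)[of "{1}"] cl1 by auto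
  qed (use T1 in simp)
  define d where "d = (\<lambda>i::nat. if i = 1 then 1 else (0::real))"
  have sumst: "(\<Sum>i\<in>states. f i) = f 1 + f 2 + f 3 + f 4" for f :: "nat \<Rightarrow> real"
  proof -
    have eq: "states = {1,2,3,4}" by (auto simp: states_def)
    show ?thesis by (subst eq) (simp add: add.assoc)
  qed
  have statd: "stationary ?M d"
    unfolding stationary_def
  proof (intro conjI ballI)
    show "(\<Sum>i\<in>states. d i) = 1" by (simp add: sumst d_def)
    fix j assume j: "j \<in> states"
    show "0 \<le> d j" by (simp add: d_def)
    show "(\<Sum>i\<in>states. d i * ?M i j) = d j" using M1[OF j] by (simp add: sumst d_def)
  qed
  have uniq: "v i = d i" if sv: "stationary ?M v" and i: "i \<in> states" for v i
  proof -
    have vnn: "\<And>i. i \<in> states \<Longrightarrow> v i \<ge> 0" and vs: "(\<Sum>i\<in>states. v i) = 1"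
      and ve: "\<And>j. j \<in> states \<Longrightarrow> (\<Sum>i\<in>states. v i * ?M i j) = v j"
      using sv by (auto simp: stationary_def)
    have rs: "?M k 1 + ?M k 2 + ?M k 3 + ?M k 4 = 1" for k
      by (simp add: markov_vals algebra_simps)
    have e2: "v 2 = v 1 * ?M 1 2 + v 2 * ?M 2 2 + v 3 * ?M 3 2 + v 4 * ?M 4 2"
      using ve[OF st(2)] by (simp add: sumst)
    have e3: "v 3 = v 1 * ?M 1 3 + v 2 * ?M 2 3 + v 3 * ?M 3 3 + v 4 * ?M 4 3"
      using ve[OF st(3)] by (simp add: sumst)
    have e4: "v 4 = v 1 * ?M 1 4 + v 2 * ?M 2 4 + v 3 * ?M 3 4 + v 4 * ?M 4 4"
      using ve[OF st(4)] by (simp add: sumst)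
    have z: "?M 1 2 = 0" "?M 1 3 = 0" "?M 1 4 = 0" using M1 st by auto
    have flow: "v 2 * ?M 2 1 + v 3 * ?M 3 1 + v 4 * ?M 4 1 = 0"
    proof -
      have r2: "?M 2 1 = 1 - ?M 2 2 - ?M 2 3 - ?M 2 4" using rs[of 2] by linarith
      have r3: "?M 3 1 = 1 - ?M 3 2 - ?M 3 3 - ?M 3 4" using rs[of 3] by linarith
      have r4: "?M 4 1 = 1 - ?M 4 2 - ?M 4 3 - ?M 4 4" using rs[of 4] by linarith
      show ?thesis unfolding r2 r3 r4 using e2 e3 e4 z by (simp add: algebra_simps)
    qed
    have nn: "v k * ?M k 1 \<ge> 0" if "k \<in> states" for k
      using vnn[OF that] Mnn[OF that] by simp
    have f0: "v k * ?M k 1 = 0" if "k \<in> {2,3,4}" for k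
    proof -
      have "v 2 * ?M 2 1 = 0" "v 3 * ?M 3 1 = 0" "v 4 * ?M 4 1 = 0"
        using flow nn[OF st(2)] nn[OF st(3)] nn[OF st(4)] by linarith+
      then show ?thesis using that by blast
    qed
    define Z where "Z = {k \<in> states. k \<noteq> 1 \<and> v k > 0}"
    have clZ: "closed_set ?M Z"
      unfolding closed_set_def
    proof (intro ballI impI)
      fix k j assume k: "k \<in> Z" and j: "j \<in> states" and m: "?M k j > 0"
      have ks: "k \<in> states" "k \<noteq> 1" "v k > 0" using k by (auto simp: Z_def)
      have "k \<in> {2,3,4}" using ks states_cases by auto
      then have "v k * ?M k 1 = 0" using f0 by blast
      then have "?M k 1 = 0" using ks(3) by simp
      then have j1: "j \<noteq> 1" using m by auto
      have "v k * ?M k j \<le> (\<Sum>i\<in>states. v i * ?M i j)"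
        by (rule member_le_sum) (use ks vnn Mnn in \<open>auto simp: states_def\<close>)
      then have "v j > 0" using ve[OF j] ks(3) m
        by (smt (verit) mult_pos_pos)
      then show "j \<in> Z" using j j1 by (auto simp: Z_def)
    qed
    have "Z = {}"
    proof (rule ccontr)
      assume "Z \<noteq> {}"
      then have "1 \<in> Z" using K[OF clZ] by (auto simp: Z_def)
      then show False by (simp add: Z_def)
    qed
    then have vz: "v k = 0" if "k \<in> states" "k \<noteq> 1" for k
      using that vnn[OF that(1)] by (fastforce simp: Z_def)
    have "v 2 = 0" "v 3 = 0" "v 4 = 0" using vz st by auto
    then have "v 1 = 1" using vs by (simp add: sumst)
    then show ?thesis using i vz by (auto simp: d_def)
  qed
  show ?thesis using part1 statd uniq by metis
qed

end
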